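(* If the sequent $\vdash A$ (with empty context) has a derivation in LJB, then $\vdash A$ also has a derivation in LJ$^{+}$.
   Context: Minimal predicate logic: terms $t ::= x \mid f(t_1,\dots,t_n)$, formulas $A ::= P(t_1,\dots,t_n)\mid A\rightarrow A\mid \forall x\,A$. Positivity: atomic formulas are positive and negative; $A\rightarrow B$ is positive (resp. negative) if $A$ is negative (resp. positive) and $B$ positive (resp. negative); $\forall x\,A$ is positive if $A$ is positive, never negative. A sequent is positive if its context formulas are negative and its right-hand side positive; both calculi below are for positive sequents. LJ$^{+}$: sequents $\Gamma\vdash A$ with $\Gamma$ a finite multiset of formulas, formulas modulo $\alpha$-equivalence; rules (L$\rightarrow$) from $\Gamma, A_1\rightarrow\dots\rightarrow A_n\rightarrow P\vdash A_i$ ($i=1..n$, $n\ge0$) infer $\Gamma, A_1\rightarrow\dots\rightarrow A_n\rightarrow P\vdash P$, $P$ atomic; (R$\forall$) from $\Gamma\vdash A$ infer $\Gamma\vdash\forall x\,A$ if $x$ not free in $\Gamma$; (R$\rightarrow$) from $\Gamma,A\vdash B$ infer $\Gamma\vdash A\rightarrow B$. LJB: an LJB-context is a finite multiset of items; an item is a formula or $[\Gamma]_V$ ($V$ a finite set of variables bound by the bracket, $\Gamma$ an LJB-context); $FV([\Gamma]_V)=FV(\Gamma)\setminus V$. Cleaning rules (anywhere in a context, contexts being multisets): $[I,\Gamma]_V\longrightarrow I,[\Gamma]_V$ if $FV(I)\cap V=\emptyset$; $[\ ]_V\longrightarrow\emptyset$; $I\,I\longrightarrow I$. This system terminates; $\Gamma{\downarrow}$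 denotes the normal form of $\Gamma$ obtained with a fixed arbitrary strategy. LJB rules apply only to LJB-sequents $\Gamma\vdash A$ with $\Gamma$ in normal form and in which, in each formula, bound variables are pairwise distinct and distinct from free variables; formulas are not identified modulo $\alpha$. Rules: (L$\rightarrow$) from $\Gamma'\vdash A_1,\dots,\Gamma'\vdash A_n$ infer $\Gamma\vdash P$, where $\Gamma=\Gamma_1,[\Gamma_2,[\dots\Gamma_{i-1},[\Gamma_i, A_1\rightarrow\dots\rightarrow A_n\rightarrow P]_{V_{i-1}}\dots]_{V_2}]_{V_1}$ ($i\ge1$), $\Gamma'=([\dots[[\Gamma_1]_{V_1},\Gamma_2]_{V_2},\dots,\Gamma_{i-1}]_{V_{i-1}},\Gamma_i,A_1\rightarrow\dots\rightarrow A_n\rightarrow P){\downarrow}$, $P$ atomic with no free variable in $V_1\cup\dots\cup V_{i-1}$; (R$\forall$) from $[\Gamma]_V{\downarrow}\vdash A$ infer $\Gamma\vdash\forall x\,A$, where $V$ is the set of all variables bound in $\forall x\,A$; (R$\rightarrow$) from $(\Gamma,A){\downarrow}\vdash B$ infer $\Gamma\vdash A\rightarrow B$. *)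

theory Defs
  imports Main "HOL-Library.Multiset"
begin

datatype trm = Var nat | Fn nat "trm list"

datatype fm = Atom nat "trm list" | Imp fm fm | All nat fm

primrec fvt :: "trm \<Rightarrow> nat set" where
  "fvt (Var x) = {x}"
| "fvt (Fn f ts) = \<Union> (set (map fvt ts))"

primrec fv :: "fm \<Rightarrow> nat set" where
  "fv (Atom p ts) = \<Union> (set (map fvt ts))"
| "fv (Imp A B) = fv A \<union> fv B"
| "fv (All x A) = fv A - {x}"

primrec bv :: "fm \<Rightarrow> nat list" where
  "bv (Atom p ts) = []"
| "bv (Imp A B) = bv A @ bv B"
| "bv (All x A) = x # bv A"

definition well_named :: "fm \<Rightarrow> bool" where
  "well_named A \<longleftrightarrow> distinct (bv A) \<and> set (bv A) \<inter> fv A = {}"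

fun is_atom :: "fm \<Rightarrow> bool" where
  "is_atom (Atom p ts) = True"
| "is_atom _ = False"

section \<open>Alpha-equivalence (via de Bruijn levels)\<close>

datatype dtrm = DBv nat | DFv nat | DFn nat "dtrm list"
datatype dfm = DAtom nat "dtrm list" | DImp dfm dfm | DAll dfm

primrec trt :: "(nat \<Rightarrow> nat option) \<Rightarrow> trm \<Rightarrow> dtrm" where
  "trt e (Var x) = (case e x of Some l \<Rightarrow> DBv l | None \<Rightarrow> DFv x)"
| "trt e (Fn f ts) = DFn f (map (trt e) ts)"

primrec trf :: "(nat \<Rightarrow> nat option) \<Rightarrow> nat \<Rightarrow> fm \<Rightarrow> dfm" where
  "trf e d (Atom p ts) = DAtom p (map (trt e) ts)"
| "trf e d (Imp A B) = DImp (trf e d A) (trf e d B)"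
| "trf e d (All x A) = DAll (trf (e(x := Some d)) (Suc d) A)"

definition alpha :: "fm \<Rightarrow> fm \<Rightarrow> bool" where
  "alpha A B \<longleftrightarrow> trf (\<lambda>_. None) 0 A = trf (\<lambda>_. None) 0 B"

fun pos :: "fm \<Rightarrow> bool" and neg :: "fm \<Rightarrow> bool" where
  "pos (Atom p ts) = True"
| "neg (Atom p ts) = True"
| "pos (Imp A B) = (neg A \<and> pos B)"
| "neg (Imp A B) = (pos A \<and> neg B)"
| "pos (All x A) = pos A"
| "neg (All x A) = False"

definition pos_seq :: "fm multiset \<Rightarrow> fm \<Rightarrow> bool" where
  "pos_seq G A \<longleftrightarrow> (\<forall>B\<in>#G. neg B) \<and> pos A"

text \<open>Formulas are considered modulo alpha-equivalence: this is rendered by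
  an explicit closure rule allowing any formula of a sequent to be replaced by
  an alpha-equivalent one, so that derivability is a property of alpha-classes.\<close>
inductive ljp :: "fm multiset \<Rightarrow> fm \<Rightarrow> bool" where
  ljp_L: "\<lbrakk> \<forall>a\<in>set As. ljp (add_mset (foldr Imp As (Atom p ts)) G) a;
           pos_seq (add_mset (foldr Imp As (Atom p ts)) G) (Atom p ts) \<rbrakk>
         \<Longrightarrow> ljp (add_mset (foldr Imp As (Atom p ts)) G) (Atom p ts)"
| ljp_RAll: "\<lbrakk> ljp G A; \<forall>B\<in>#G. x \<notin> fv B; pos_seq G (All x A) \<rbrakk> \<Longrightarrow> ljp G (All x A)"
| ljp_RImp: "\<lbrakk> ljp (add_mset A G) B; pos_seq G (Imp A B) \<rbrakk> \<Longrightarrow> ljp G (Imp A B)"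
| ljp_alpha: "\<lbrakk> ljp G A; rel_mset alpha G G'; alpha A A' \<rbrakk> \<Longrightarrow> ljp G' A'"

datatype item = Fm fm | Br "nat set" "item multiset"

primrec fvi :: "item \<Rightarrow> nat set" where
  "fvi (Fm A) = fv A"
| "fvi (Br V G) = \<Union> (set_mset (image_mset fvi G)) - V"

primrec fmsi :: "item \<Rightarrow> fm set" where
  "fmsi (Fm A) = {A}"
| "fmsi (Br V G) = \<Union> (set_mset (image_mset fmsi G))"

definition fms :: "item multiset \<Rightarrow> fm set" where
  "fms G = \<Union> (fmsi ` set_mset G)"

inductive clean1 :: "item multiset \<Rightarrow> item multiset \<Rightarrow> bool" where
  cl_out: "fvi I \<inter> V = {} \<Longrightarrow>
      clean1 (add_mset (Br V (add_mset I G)) R) (add_mset I (add_mset (Br V G) R))"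
| cl_empty: "clean1 (add_mset (Br V {#}) R) R"
| cl_dup: "clean1 (add_mset I (add_mset I R)) (add_mset I R)"
| cl_in: "clean1 G G' \<Longrightarrow> clean1 (add_mset (Br V G) R) (add_mset (Br V G') R)"

definition clean_normal :: "item multiset \<Rightarrow> bool" where
  "clean_normal G \<longleftrightarrow> (\<nexists>G'. clean1 G G')"

text \<open>A (fixed, arbitrary) normalisation strategy: a function returning, for each
  context, a normal form reachable from it by cleaning steps.\<close>
definition nf_strategy :: "(item multiset \<Rightarrow> item multiset) \<Rightarrow> bool" where
  "nf_strategy nf \<longleftrightarrow> (\<forall>G. clean1\<^sup>*\<^sup>* G (nf G) \<and> clean_normal (nf G))"

definition ljb_seq :: "item multiset \<Rightarrow> fm \<Rightarrow> bool" where
  "ljb_seq G A \<longleftrightarrow> clean_normal G \<and> (\<forall>B\<in>fms G. well_named B \<and> neg B)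
      \<and> well_named A \<and> pos A"

text \<open>Nesting: nest [(V1,G1),...,(V(i-1),G(i-1))] D = G1,[G2,[...[D]_{V(i-1)}...]_{V2}]_{V1}\<close>
fun nest :: "(nat set \<times> item multiset) list \<Rightarrow> item multiset \<Rightarrow> item multiset" where
  "nest [] D = D"
| "nest ((V, G) # r) D = G + {# Br V (nest r D) #}"

text \<open>Turning inside out: flipb [(V1,G1),...,(V(i-1),G(i-1))]
   = [...[[G1]_{V1},G2]_{V2},...,G(i-1)]_{V(i-1)} (empty for the empty list).\<close>
definition flipb :: "(nat set \<times> item multiset) list \<Rightarrow> item multiset" where
  "flipb ps = foldl (\<lambda>acc (V, G). {# Br V (acc + G) #}) {#} ps"

inductive ljb :: "(item multiset \<Rightarrow> item multiset) \<Rightarrow> item multiset \<Rightarrow> fm \<Rightarrow> bool"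
  for nf :: "item multiset \<Rightarrow> item multiset" where
  ljb_L: "\<lbrakk> C = foldr Imp As (Atom p ts);
           \<forall>a\<in>set As. ljb nf (nf (flipb ps + add_mset (Fm C) Gi)) a;
           fv (Atom p ts) \<inter> (\<Union>(V, _)\<in>set ps. V) = {};
           ljb_seq (nest ps (add_mset (Fm C) Gi)) (Atom p ts) \<rbrakk>
         \<Longrightarrow> ljb nf (nest ps (add_mset (Fm C) Gi)) (Atom p ts)"
| ljb_RAll: "\<lbrakk> ljb nf (nf {# Br (set (bv (All x A))) G #}) A; ljb_seq G (All x A) \<rbrakk>
         \<Longrightarrow> ljb nf G (All x A)"
| ljb_RImp: "\<lbrakk> ljb nf (nf (add_mset (Fm A) G)) B; ljb_seq G (Imp A B) \<rbrakk>
         \<Longrightarrow> ljb nf G (Imp A B)"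

end

theory Submission
  imports Defs
begin
primrec rent :: "(nat \<Rightarrow> nat) \<Rightarrow> trm \<Rightarrow> trm" where
  "rent r (Var x) = Var (r x)"
| "rent r (Fn f ts) = Fn f (map (rent r) ts)"

primrec ren :: "(nat \<Rightarrow> nat) \<Rightarrow> fm \<Rightarrow> fm" where
  "ren r (Atom p ts) = Atom p (map (rent r) ts)"
| "ren r (Imp A B) = Imp (ren r A) (ren r B)"
| "ren r (All x A) = All x (ren (r(x := x)) A)"

definition good :: "nat set \<Rightarrow> (nat \<Rightarrow> nat) \<Rightarrow> bool" where
  "good BV r \<longleftrightarrow> (\<forall>u. r u \<noteq> u \<longrightarrow> r u \<notin> BV)"

lemma rent_id: "rent (\<lambda>a. a) t = t"
proof (induction t)
  case (Fn f ts)
  then have "map (rent (\<lambda>a. a)) ts = ts" by (intro map_idI) auto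
  then show ?case by simp
qed simp

lemma ren_id: "ren (\<lambda>a. a) A = A"
proof (induction A)
  case (Atom p ts)
  have "map (rent (\<lambda>a. a)) ts = ts" by (intro map_idI) (simp add: rent_id)
  then show ?case by simp
next
  case (All x A)
  have "(\<lambda>a. a)(x := x) = (\<lambda>a. a)" by auto
  then show ?case using All by simp
qed auto

lemma rent_cong: "\<forall>u\<in>fvt t. r u = r' u \<Longrightarrow> rent r t = rent r' t"
  by (induction t) auto

lemma ren_cong': "\<forall>u\<in>fv A. r u = r' u \<Longrightarrow> ren r A = ren r' A"
proof (induction A arbitrary: r r')
  case (Atom p ts) then show ?case by (auto intro!: rent_cong)
next
  case (Imp A B) then show ?case by auto
next
  case (All x A)
  have "\<forall>u\<in>fv A. (r(x:=x)) u = (r'(x:=x)) u" using All.prems by auto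
  then have "ren (r(x:=x)) A = ren (r'(x:=x)) A" by (rule All.IH)
  then show ?case by simp
qed

lemma ren_cong: "(\<And>u. u \<in> fv A \<Longrightarrow> r u = r' u) \<Longrightarrow> ren r A = ren r' A"
  by (rule ren_cong') blast

lemma pos_neg_ren: "pos (ren r A) = pos A \<and> neg (ren r A) = neg A"
  by (induction A arbitrary: r) auto

lemma ren_foldr: "ren r (foldr Imp As P) = foldr Imp (map (ren r) As) (ren r P)"
  by (induction As) auto

lemma finite_fvt: "finite (fvt t)"
  by (induction t) auto

lemma finite_fv: "finite (fv A)"
  by (induction A) (auto simp: finite_fvt)

lemma trt_ren:
  "(\<And>u. u \<in> fvt t \<Longrightarrow> e (s u) = e' (s' u) \<and> (e (s u) = None \<longrightarrow> s u = s' u))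
   \<Longrightarrow> trt e (rent s t) = trt e' (rent s' t)"
proof (induction t)
  case (Var x) then show ?case by (auto split: option.splits)
next
  case (Fn f ts) then show ?case by auto
qed

lemma trf_ren:
  "(\<And>u. u \<in> fv A \<Longrightarrow> e (s u) = e' (s' u) \<and> (e (s u) = None \<longrightarrow> s u = s' u)
       \<and> (s u = u \<or> s u \<notin> set (bv A)) \<and> (s' u = u \<or> s' u \<notin> set (bv A)))
   \<Longrightarrow> trf e d (ren s A) = trf e' d (ren s' A)"
proof (induction A arbitrary: e e' s s' d)
  case (Atom p ts) then show ?case by (auto intro!: trt_ren)
next
  case (Imp A B)
  show ?case using Imp.prems by (auto intro!: Imp.IH)
next
  case (All x A)
  show ?case
  proof (simp, rule All.IH)
    fix u assume u: "u \<in> fv A"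
    show "(e(x \<mapsto> d)) ((s(x := x)) u) = (e'(x \<mapsto> d)) ((s'(x := x)) u) \<and>
          ((e(x \<mapsto> d)) ((s(x := x)) u) = None \<longrightarrow> (s(x := x)) u = (s'(x := x)) u) \<and>
          ((s(x := x)) u = u \<or> (s(x := x)) u \<notin> set (bv A)) \<and>
          ((s'(x := x)) u = u \<or> (s'(x := x)) u \<notin> set (bv A))"
    proof (cases "u = x")
      case True then show ?thesis by simp
    next
      case False
      then have uf: "u \<in> fv (All x A)" using u by simp
      from All.prems[OF uf] False have "s u \<noteq> x" "s' u \<noteq> x" by auto
      with All.prems[OF uf] False show ?thesis by auto
    qed
  qed
qed

lemma alpha_rename:
  assumes g: "good BV r" and x: "x \<in> BV" and bvA: "set (bv A) \<subseteq> BV"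
    and y: "y \<notin> BV" "y \<notin> r ` fv A"
  shows "alpha (All y (ren (r(x := y)) A)) (ren r (All x A))"
  unfolding alpha_def
proof (simp, rule trf_ren)
  fix u assume u: "u \<in> fv A"
  show "((\<lambda>_. None)(y \<mapsto> 0)) ((r(x := y)) u) = ((\<lambda>_. None)(x \<mapsto> 0)) ((r(x := x)) u) \<and>
        (((\<lambda>_. None)(y \<mapsto> 0)) ((r(x := y)) u) = None \<longrightarrow> (r(x := y)) u = (r(x := x)) u) \<and>
        ((r(x := y)) u = u \<or> (r(x := y)) u \<notin> set (bv A)) \<and>
        ((r(x := x)) u = u \<or> (r(x := x)) u \<notin> set (bv A))"
  proof (cases "u = x")
    case True then show ?thesis using y bvA by auto
  next
    case False
    have "r u \<noteq> y" using y u by auto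
    moreover have "r u \<noteq> x" using g x False unfolding good_def by auto
    moreover have "r u = u \<or> r u \<notin> set (bv A)" using g bvA unfolding good_def by auto
    ultimately show ?thesis using False by auto
  qed
qed


inductive repI :: "nat set \<Rightarrow> (nat \<Rightarrow> nat) \<Rightarrow> item \<Rightarrow> fm multiset \<Rightarrow> bool"
  and repM :: "nat set \<Rightarrow> (nat \<Rightarrow> nat) \<Rightarrow> item multiset \<Rightarrow> fm multiset \<Rightarrow> bool"
  for BV :: "nat set" where
  rI_fm: "neg A \<Longrightarrow> repI BV r (Fm A) {#ren r A#}"
| rI_br: "repM BV rr H G \<Longrightarrow> \<forall>u. u \<notin> V \<longrightarrow> rr u = r u \<Longrightarrow> good BV rr \<Longrightarrow> repI BV r (Br V H) G"
| rM_empty: "repM BV r {#} {#}"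
| rM_add: "repI BV r I GI \<Longrightarrow> repM BV r G G' \<Longrightarrow> repM BV r (add_mset I G) (GI + G')"


lemma repM_inv:
  "repM BV r M G \<Longrightarrow> I \<in># M \<Longrightarrow> \<exists>GI G'. repI BV r I GI \<and> repM BV r (M - {#I#}) G' \<and> G = GI + G'"
proof (induction rule: repI_repM.inducts(2)[where ?P1.0 = "\<lambda>_ _ _. True"])
  case (rM_add r J GJ G0 G')
  show ?case
  proof (cases "I = J")
    case True then show ?thesis using rM_add by auto
  next
    case False
    then have "I \<in># G0" using rM_add.prems by auto
    then obtain GI G'' where "repI BV r I GI" "repM BV r (G0 - {#I#}) G''" "G' = GI + G''"
      using rM_add.IH by blast
    moreover have "add_mset J G0 - {#I#} = add_mset J (G0 - {#I#})" using False by auto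
    ultimately show ?thesis using rM_add.hyps(1)
      by (metis repI_repM.rM_add union_lcomm)
  qed
qed auto


lemma repM_add_inv:
  "repM BV r (add_mset I M) G \<Longrightarrow> \<exists>GI G'. repI BV r I GI \<and> repM BV r M G' \<and> G = GI + G'"
  using repM_inv[of BV r "add_mset I M" G I] by auto

lemma repM_empty_inv: "repM BV r {#} G \<Longrightarrow> G = {#}"
  by (cases rule: repM.cases) auto

lemma repM_plus:
  "repM BV r M1 G1 \<Longrightarrow> repM BV r M2 G2 \<Longrightarrow> repM BV r (M1 + M2) (G1 + G2)"
proof (induction rule: repI_repM.inducts(2)[where ?P1.0 = "\<lambda>_ _ _. True"])
  case (rM_add r I GI G G')
  have "repM BV r (G + M2) (G' + G2)" using rM_add.IH rM_add.prems by blast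
  with rM_add.hyps(1) have "repM BV r (add_mset I (G + M2)) (GI + (G' + G2))"
    by (rule repI_repM.rM_add)
  then show ?case by (simp add: add.assoc)
qed (auto intro: repI_repM.intros)

lemma repM_split:
  "repM BV r (M1 + M2) G \<Longrightarrow> \<exists>G1 G2. repM BV r M1 G1 \<and> repM BV r M2 G2 \<and> G = G1 + G2"
proof (induction M1 arbitrary: G)
  case empty then show ?case by (auto intro: repI_repM.intros)
next
  case (add I M1)
  from add.prems obtain GI G' where "repI BV r I GI" "repM BV r (M1 + M2) G'" "G = GI + G'"
    using repM_add_inv by (metis union_mset_add_mset_left)
  with add.IH show ?case by (metis repI_repM.rM_add union_assoc)
qed

lemma repM_single: "repM BV r {#I#} G \<longleftrightarrow> repI BV r I G"
proof
  assume "repM BV r {#I#} G" then show "repI BV r I G"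
    using repM_add_inv[of BV r I "{#}" G] repM_empty_inv by fastforce
next
  assume "repI BV r I G" then show "repM BV r {#I#} G"
    using repI_repM.rM_add[OF _ repI_repM.rM_empty] by fastforce
qed

lemma repI_Fm_inv: "repI BV r (Fm A) G \<Longrightarrow> G = {#ren r A#} \<and> neg A"
  by (cases rule: repI.cases) auto

lemma repI_Br_inv: "repI BV r (Br V H) G \<Longrightarrow>
   \<exists>rr. repM BV rr H G \<and> (\<forall>u. u \<notin> V \<longrightarrow> rr u = r u) \<and> good BV rr"
  by (cases rule: repI.cases) auto

lemma rep_neg:
  shows "repI BV r I G \<Longrightarrow> \<forall>B\<in>#G. neg B"
    and "repM BV r M G \<Longrightarrow> \<forall>B\<in>#G. neg B"
  by (induction rule: repI_repM.inducts) (auto simp: pos_neg_ren)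

lemma rep_inv:
  shows "repI BV r I G \<Longrightarrow> good BV r' \<Longrightarrow> (\<forall>u\<in>fvi I. r' u = r u) \<Longrightarrow> repI BV r' I G"
    and "repM BV r M G \<Longrightarrow> good BV r' \<Longrightarrow> (\<forall>u\<in>\<Union>(fvi ` set_mset M). r' u = r u) \<Longrightarrow> repM BV r' M G"
proof (induction arbitrary: r' and r' rule: repI_repM.inducts)
  case (rI_fm A r)
  have "ren r' A = ren r A" by (rule ren_cong) (use rI_fm in auto)
  then show ?case using rI_fm repI_repM.rI_fm by metis
next
  case (rI_br rr H G V r)
  define rr' where "rr' = (\<lambda>u. if u \<in> V then rr u else r' u)"
  have g: "good BV rr'" using rI_br unfolding good_def rr'_def by auto
  have "repM BV rr' H G"
  proof (rule rI_br.IH)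
    show "good BV rr'" by (rule g)
    show "\<forall>u\<in>\<Union> (fvi ` set_mset H). rr' u = rr u"
      using rI_br unfolding rr'_def by auto
  qed
  moreover have "\<forall>u. u \<notin> V \<longrightarrow> rr' u = r' u" unfolding rr'_def by auto
  ultimately show ?case using g by (rule repI_repM.rI_br)
next
  case (rM_empty r)
  show ?case by (rule repI_repM.rM_empty)
next
  case (rM_add r I GI G G')
  show ?case
  proof (rule repI_repM.rM_add)
    show "repI BV r' I GI" using rM_add by auto
    show "repM BV r' G G'" using rM_add by auto
  qed
qed


lemma clean_rep:
  "clean1 M M' \<Longrightarrow> repM BV r M G \<Longrightarrow> good BV r \<Longrightarrow> \<exists>G' D. repM BV r M' G' \<and> G = G' + D"
proof (induction arbitrary: r G rule: clean1.induct)
  case (cl_out I V H R)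
  from repM_add_inv[OF cl_out.prems(1)] obtain GB GR where
    b: "repI BV r (Br V (add_mset I H)) GB" and rR: "repM BV r R GR" and G: "G = GB + GR" by blast
  from repI_Br_inv[OF b] obtain rr where rr: "repM BV rr (add_mset I H) GB"
    "\<forall>u. u \<notin> V \<longrightarrow> rr u = r u" "good BV rr" by blast
  from repM_add_inv[OF rr(1)] obtain GI GH where
    rI: "repI BV rr I GI" and rH: "repM BV rr H GH" and GB: "GB = GI + GH" by blast
  have rI': "repI BV r I GI"
    by (rule rep_inv(1)[OF rI cl_out.prems(2)]) (use cl_out.hyps rr(2) in auto)
  have "repI BV r (Br V H) GH" by (rule repI_repM.rI_br[OF rH rr(2) rr(3)])
  then have "repM BV r (add_mset (Br V H) R) (GH + GR)" using rR by (rule repI_repM.rM_add)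
  then have "repM BV r (add_mset I (add_mset (Br V H) R)) (GI + (GH + GR))"
    by (rule repI_repM.rM_add[OF rI'])
  then show ?case using G GB by (metis add.assoc add.right_neutral)
next
  case (cl_empty V R)
  from repM_add_inv[OF cl_empty.prems(1)] obtain GB GR where
    b: "repI BV r (Br V {#}) GB" and rR: "repM BV r R GR" and G: "G = GB + GR" by blast
  from repI_Br_inv[OF b] repM_empty_inv have "GB = {#}" by blast
  then show ?case using rR G by auto
next
  case (cl_dup I R)
  from repM_add_inv[OF cl_dup.prems(1)] obtain G1 G2 where
    1: "repI BV r I G1" and 2: "repM BV r (add_mset I R) G2" and G: "G = G1 + G2" by blast
  then show ?case by (metis add.commute)
next
  case (cl_in M M' V R)
  from repM_add_inv[OF cl_in.prems(1)] obtain GB GR where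
    b: "repI BV r (Br V M) GB" and rR: "repM BV r R GR" and G: "G = GB + GR" by blast
  from repI_Br_inv[OF b] obtain rr where rr: "repM BV rr M GB"
    "\<forall>u. u \<notin> V \<longrightarrow> rr u = r u" "good BV rr" by blast
  from cl_in.IH[OF rr(1) rr(3)] obtain GB' D where "repM BV rr M' GB'" "GB = GB' + D" by blast
  moreover from this have "repI BV r (Br V M') GB'" using rr by (intro repI_repM.rI_br) auto
  ultimately show ?case using rR G
    by (metis repI_repM.rM_add union_assoc union_commute)
qed

lemma clean_rep_star:
  "clean1\<^sup>*\<^sup>* M M' \<Longrightarrow> repM BV r M G \<Longrightarrow> good BV r \<Longrightarrow> \<exists>G' D. repM BV r M' G' \<and> G = G' + D"
proof (induction arbitrary: G rule: rtranclp_induct)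
  case base then show ?case by (metis add.right_neutral)
next
  case (step y z)
  from step.IH[OF step.prems] obtain G1 D1 where "repM BV r y G1" "G = G1 + D1" by blast
  with clean_rep[OF step.hyps(2) _ step.prems(2)] show ?case by (metis union_assoc)
qed

lemma fms_add[simp]: "fms (add_mset I G) = fmsi I \<union> fms G"
  by (simp add: fms_def)
lemma fms_plus[simp]: "fms (G + H) = fms G \<union> fms H"
  by (simp add: fms_def)
lemma fms_empty[simp]: "fms {#} = {}"
  by (simp add: fms_def)
lemma fmsi_Br[simp]: "fmsi (Br V G) = fms G"
  by (simp add: fms_def)

lemma clean_fms: "clean1 M M' \<Longrightarrow> fms M' \<subseteq> fms M"
  by (induction rule: clean1.induct) (auto simp: fms_def)

lemma clean_fms_star: "clean1\<^sup>*\<^sup>* M M' \<Longrightarrow> fms M' \<subseteq> fms M"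
  by (induction rule: rtranclp_induct) (auto dest: clean_fms)


definition fl :: "item multiset \<Rightarrow> (nat set \<times> item multiset) list \<Rightarrow> item multiset" where
  "fl acc ps = foldl (\<lambda>acc (V, G). {# Br V (acc + G) #}) acc ps"

lemma fl_Nil[simp]: "fl acc [] = acc" by (simp add: fl_def)
lemma fl_Cons[simp]: "fl acc ((V, G) # ps) = fl {# Br V (acc + G) #} ps" by (simp add: fl_def)
lemma flipb_fl: "flipb ps = fl {#} ps" by (simp add: fl_def flipb_def)

lemma fms_nest: "fms (nest ps D) = fms D \<union> (\<Union>(V, G)\<in>set ps. fms G)"
proof (induction ps)
  case (Cons p ps) then show ?case by (cases p) (simp add: fms_def Un_ac)
qed simp

lemma fms_fl: "fms (fl acc ps) = fms acc \<union> (\<Union>(V, G)\<in>set ps. fms G)"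
proof (induction ps arbitrary: acc)
  case (Cons p ps) then show ?case by (cases p) (simp add: fms_def Un_ac)
qed simp

lemma fms_flip: "fms (flipb ps + D) = fms (nest ps D)"
  by (auto simp: flipb_fl fms_fl fms_nest)

lemma flip_rep:
  "repM BV r (nest ps D) G \<Longrightarrow> good BV r \<Longrightarrow> repM BV r acc Ga \<Longrightarrow>
   \<exists>r'. good BV r' \<and> repM BV r' (fl acc ps + D) (Ga + G) \<and>
        (\<forall>u. u \<notin> (\<Union>(V, _)\<in>set ps. V) \<longrightarrow> r' u = r u)"
proof (induction ps arbitrary: r G acc Ga)
  case Nil
  then show ?case using repM_plus by fastforce
next
  case (Cons p ps)
  obtain V H where p: "p = (V, H)" by (cases p)
  from Cons.prems(1) have "repM BV r (H + {#Br V (nest ps D)#}) G" by (simp add: p)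
  from repM_split[OF this] obtain GH GB where
    rH: "repM BV r H GH" and rB: "repM BV r {#Br V (nest ps D)#} GB" and G: "G = GH + GB" by blast
  from rB repM_single repI_Br_inv obtain rr where rr: "repM BV rr (nest ps D) GB"
    "\<forall>u. u \<notin> V \<longrightarrow> rr u = r u" "good BV rr" by blast
  have "repM BV r (acc + H) (Ga + GH)" by (rule repM_plus[OF Cons.prems(3) rH])
  then have "repI BV rr (Br V (acc + H)) (Ga + GH)"
    by (rule repI_repM.rI_br) (use rr(2) Cons.prems(2) in auto)
  then have acc': "repM BV rr {#Br V (acc + H)#} (Ga + GH)" by (simp add: repM_single)
  from Cons.IH[OF rr(1) rr(3) acc'] obtain r' where r': "good BV r'"
    "repM BV r' (fl {#Br V (acc + H)#} ps + D) (Ga + GH + GB)"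
    "\<forall>u. u \<notin> (\<Union>(V, _)\<in>set ps. V) \<longrightarrow> r' u = rr u" by blast
  show ?case
  proof (intro exI conjI)
    show "good BV r'" by (rule r'(1))
    show "repM BV r' (fl acc (p # ps) + D) (Ga + G)" using r'(2) G p by (simp add: add.assoc)
    show "\<forall>u. u \<notin> (\<Union>(V, _)\<in>set (p # ps). V) \<longrightarrow> r' u = r u"
      using r'(3) rr(2) p by auto
  qed
qed


lemma bv_foldr: "set (bv (foldr Imp As P)) = (\<Union>a\<in>set As. set (bv a)) \<union> set (bv P)"
  by (induction As) auto

lemma main:
  assumes nfs: "nf_strategy nf" and finBV: "finite BV"
  shows "ljb nf M A \<Longrightarrow> (\<forall>B\<in>fms M. set (bv B) \<subseteq> BV) \<Longrightarrow> set (bv A) \<subseteq> BV \<Longrightarrow>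
    repM BV r M G \<Longrightarrow> good BV r \<Longrightarrow> (\<forall>B\<in>#D. neg B) \<Longrightarrow> ljp (G + D) (ren r A)"
proof (induction arbitrary: r G D rule: ljb.induct)
  case (ljb_L C As p ts ps Gi)
  define X where "X = flipb ps + add_mset (Fm C) Gi"
  have Cdef: "C = foldr Imp As (Atom p ts)" by fact
  have IH: "\<forall>a\<in>set As. (\<forall>r G D. (\<forall>B\<in>fms (nf X). set (bv B) \<subseteq> BV) \<longrightarrow> set (bv a) \<subseteq> BV \<longrightarrow>
    repM BV r (nf X) G \<longrightarrow> good BV r \<longrightarrow> (\<forall>B\<in>#D. neg B) \<longrightarrow> ljp (G + D) (ren r a))"
    using ljb_L.IH unfolding X_def by blast
  from flip_rep[OF ljb_L.prems(3) ljb_L.prems(4) repI_repM.rM_empty] obtain r' where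
    r': "good BV r'" "repM BV r' X G" "\<forall>u. u \<notin> (\<Union>(V, _)\<in>set ps. V) \<longrightarrow> r' u = r u"
    unfolding X_def flipb_fl by auto
  have cl: "clean1\<^sup>*\<^sup>* X (nf X)" using nfs unfolding nf_strategy_def by blast
  from clean_rep_star[OF cl r'(2) r'(1)] obtain G' D' where
    G': "repM BV r' (nf X) G'" "G = G' + D'" by blast
  have fmsX: "fms (nf X) \<subseteq> fms (nest ps (add_mset (Fm C) Gi))"
    using clean_fms_star[OF cl] unfolding X_def fms_flip .
  have CG: "C \<in> fms (nest ps (add_mset (Fm C) Gi))" by (simp add: fms_nest)
  have negG: "\<forall>B\<in>#G. neg B" using rep_neg(2)[OF ljb_L.prems(3)] .
  have negD': "\<forall>B\<in>#D' + D. neg B" using negG ljb_L.prems(5) G'(2) by auto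
  have prem: "\<forall>a\<in>set (map (ren r') As). ljp (G + D) a"
  proof
    fix a' assume "a' \<in> set (map (ren r') As)"
    then obtain a where a: "a \<in> set As" "a' = ren r' a" by auto
    have "set (bv C) \<subseteq> BV" using ljb_L.prems(1) CG by blast
    then have "set (bv a) \<subseteq> BV" using a(1) by (auto simp: Cdef bv_foldr)
    then have "ljp (G' + (D' + D)) (ren r' a)"
      using IH a(1) ljb_L.prems(1) fmsX G'(1) r'(1) negD' by blast
    then show "ljp (G + D) a'" using a G'(2) by (simp add: add.assoc)
  qed
  have CinG: "ren r' C \<in># G"
  proof -
    from repM_split[of BV r' "flipb ps" "add_mset (Fm C) Gi" G] r'(2) obtain G1 G2 where
      "repM BV r' (add_mset (Fm C) Gi) G2" "G = G1 + G2" unfolding X_def by blast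
    moreover from repM_add_inv[OF this(1)] obtain GI G'' where
      "repI BV r' (Fm C) GI" "G2 = GI + G''" by blast
    ultimately show ?thesis using repI_Fm_inv by fastforce
  qed
  have atom: "ren r' (Atom p ts) = ren r (Atom p ts)"
    by (rule ren_cong) (use r'(3) ljb_L(2) in auto)
  define G0 where "G0 = G + D - {#ren r' C#}"
  have GD: "G + D = add_mset (foldr Imp (map (ren r') As) (Atom p (map (rent r) ts))) G0"
  proof -
    have atom': "map (rent r') ts = map (rent r) ts" using atom by simp
    have "foldr Imp (map (ren r') As) (ren r (Atom p ts)) \<in># G + D"
      using CinG by (simp add: Cdef ren_foldr atom')
    then show ?thesis unfolding G0_def by (simp add: Cdef ren_foldr atom')
  qed
  have "ljp (add_mset (foldr Imp (map (ren r') As) (Atom p (map (rent r) ts))) G0) (Atom p (map (rent r) ts))"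
  proof (rule ljp_L)
    show "\<forall>a\<in>set (map (ren r') As). ljp (add_mset (foldr Imp (map (ren r') As) (Atom p (map (rent r) ts))) G0) a"
      using prem GD by simp
    show "pos_seq (add_mset (foldr Imp (map (ren r') As) (Atom p (map (rent r) ts))) G0) (Atom p (map (rent r) ts))"
    proof -
      have nGD: "\<forall>B\<in>#G+D. neg B" using negG ljb_L.prems(5) by auto
      show ?thesis unfolding pos_seq_def using nGD[unfolded GD] by simp
    qed
  qed
  then show ?case using GD by simp
next
  case (ljb_RAll x A M)
  define V where "V = set (bv (All x A))"
  define X where "X = {#Br V M#}"
  have xBV: "x \<in> BV" and bvA: "set (bv A) \<subseteq> BV" using ljb_RAll.prems(2) by auto
  have xV: "x \<in> V" unfolding V_def by simp
  have posA: "pos A" using ljb_RAll.hyps(2) unfolding ljb_seq_def by simp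
  define S where "S = (\<Union>B\<in>set_mset (G + D). fv B) \<union> BV \<union> r ` fv A"
  have "finite S" unfolding S_def using finBV by (simp add: finite_fv)
  then obtain y where y: "y \<notin> S" using ex_new_if_finite[OF infinite_UNIV_nat] by blast
  define r'' where "r'' = r(x := y)"
  have gr: "good BV r''" using ljb_RAll.prems(4) y unfolding r''_def good_def S_def by auto
  have "repI BV r'' (Br V M) G"
  proof (rule repI_repM.rI_br[OF ljb_RAll.prems(3)])
    show "\<forall>u. u \<notin> V \<longrightarrow> r u = r'' u" using xV unfolding r''_def by auto
    show "good BV r" by (rule ljb_RAll.prems(4))
  qed
  then have rX: "repM BV r'' X G" unfolding X_def by (simp add: repM_single)
  have cl: "clean1\<^sup>*\<^sup>* X (nf X)" using nfs unfolding nf_strategy_def by blast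
  from clean_rep_star[OF cl rX gr] obtain G' D' where
    G': "repM BV r'' (nf X) G'" "G = G' + D'" by blast
  have fmsX: "\<forall>B\<in>fms (nf X). set (bv B) \<subseteq> BV"
    using clean_fms_star[OF cl] ljb_RAll.prems(1) unfolding X_def by (auto simp: fms_def)
  have negG: "\<forall>B\<in>#G. neg B" using rep_neg(2)[OF ljb_RAll.prems(3)] .
  have negD': "\<forall>B\<in>#D' + D. neg B" using negG ljb_RAll.prems(5) G'(2) by auto
  have "ljp (G' + (D' + D)) (ren r'' A)"
    by (rule ljb_RAll.IH[folded V_def, folded X_def, OF fmsX bvA G'(1) gr negD'])
  then have IH: "ljp (G + D) (ren r'' A)" using G'(2) by (simp add: add.assoc)
  have "ljp (G + D) (All y (ren r'' A))"
  proof (rule ljp_RAll[OF IH])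
    show "\<forall>B\<in>#G + D. y \<notin> fv B" using y unfolding S_def by auto
    show "pos_seq (G + D) (All y (ren r'' A))"
      using negG ljb_RAll.prems(5) posA unfolding pos_seq_def by (auto simp: pos_neg_ren)
  qed
  moreover have "rel_mset alpha (G + D) (G + D)" by (rule multiset.rel_refl) (simp add: alpha_def)
  moreover have "alpha (All y (ren r'' A)) (ren r (All x A))"
    unfolding r''_def by (rule alpha_rename[OF ljb_RAll.prems(4) xBV bvA]) (use y S_def in auto)
  ultimately show ?case by (rule ljp_alpha)
next
  case (ljb_RImp A M B)
  define X where "X = add_mset (Fm A) M"
  have seq: "neg A" "pos B" using ljb_RImp.hyps(2) unfolding ljb_seq_def by auto
  have rX: "repM BV r X (add_mset (ren r A) G)"
    using repI_repM.rM_add[OF repI_repM.rI_fm[OF seq(1)] ljb_RImp.prems(3)] unfolding X_def by simp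
  have cl: "clean1\<^sup>*\<^sup>* X (nf X)" using nfs unfolding nf_strategy_def by blast
  from clean_rep_star[OF cl rX ljb_RImp.prems(4)] obtain G' D' where
    G': "repM BV r (nf X) G'" "add_mset (ren r A) G = G' + D'" by blast
  have fmsX: "\<forall>B\<in>fms (nf X). set (bv B) \<subseteq> BV"
    using clean_fms_star[OF cl] ljb_RImp.prems(1,2) unfolding X_def by auto
  have negG: "\<forall>B\<in>#G. neg B" using rep_neg(2)[OF ljb_RImp.prems(3)] .
  have negD': "\<forall>B\<in>#D' + D. neg B"
  proof -
    have "\<forall>B\<in>#add_mset (ren r A) G. neg B" using negG seq(1) by (simp add: pos_neg_ren)
    then show ?thesis using ljb_RImp.prems(5) G'(2) by auto
  qed
  have "ljp (G' + (D' + D)) (ren r B)"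
  proof (rule ljb_RImp.IH[folded X_def, OF fmsX _ G'(1) ljb_RImp.prems(4) negD'])
    show "set (bv B) \<subseteq> BV" using ljb_RImp.prems(2) by simp
  qed
  then have "ljp (add_mset (ren r A) (G + D)) (ren r B)" using G'(2)
    by (metis add.assoc union_mset_add_mset_left)
  moreover have "pos_seq (G + D) (Imp (ren r A) (ren r B))"
    using negG ljb_RImp.prems(5) seq unfolding pos_seq_def by (auto simp: pos_neg_ren)
  ultimately show ?case by (simp add: ljp_RImp)
qed


theorem proposition7:
  fixes nf :: "item multiset \<Rightarrow> item multiset" and A :: fm
  assumes "nf_strategy nf"
    and "ljb nf {#} A"
  shows "ljp {#} A"
proof -
  have g: "good (set (bv A)) (\<lambda>a. a)" unfolding good_def by simp
  have "ljp ({#} + {#}) (ren (\<lambda>a. a) A)"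
    by (rule main[OF assms(1) _ assms(2) _ _ repI_repM.rM_empty g]) auto
  then show ?thesis by (simp add: ren_id)
qed

end
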